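(* Both $IIS$ and head spine $SII$ absorb call-by-name $III$: for every term $M$, $IIS(III(M)) = IIS(M)$ and $SII(III(M))=SII(M)$ (equality of partial functions: either both sides are undefined or both are defined and equal).
   Context: Terms: $\Lambda ::= x\mid\lambda x.\Lambda\mid\Lambda\Lambda$; $[N/x]B$ is capture-avoiding substitution. An evaluator is a partial function $\Lambda\rightharpoonup\Lambda$ defined by inference rules, undefined (divergent) where no finite derivation exists; $\mathrm{id}$ is the identity; composition $e_2\circ e_1$ is undefined where $e_1$ is. Eval-apply template: given evaluators $la,op_1,ar_1,op_2,ar_2$ (possibly $ea$ itself), $ea$ is defined by (var) $ea(x)=x$; (abs) $ea(\lambda x.B)=\lambda x.B'$ if $la(B)=B'$; (con) $ea(MN)=B'$ if $op_1(M)=\lambda x.B$, $ar_1(N)=N'$, $ea([N'/x]B)=B'$; (neu) $ea(MN)=M''N'$ if $op_1(M)=M'$, $M'$ not an abstraction, $op_2(M')=M''$, $ar_2(N)=N'$. Uniform evaluator $XYZ\in\{I,S\}^3$: $op_1=ea$, $op_2=\mathrm{id}$, and $la$, $ar_1$, $ar_2$ equal to $ea$ itself when the corresponding letter $X$, $Y$, $Z$ is $S$ and to $\mathrm{id}$ when it is $I$. Thus $III$ is call-by-name and $SII$ is head spine. A strategy $st_2$ absorbs $st_1$ iff $st_2\circ st_1=st_2$. *)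

theory Defs
  imports Main
begin

text \<open>Lambda terms up to alpha-equivalence, represented with de Bruijn indices.\<close>
datatype tm = Var nat | Abs tm | App tm tm

fun lift :: "tm \<Rightarrow> nat \<Rightarrow> tm" where
  "lift (Var i) k = (if i < k then Var i else Var (Suc i))"
| "lift (Abs s) k = Abs (lift s (Suc k))"
| "lift (App s t) k = App (lift s k) (lift t k)"

fun subst :: "tm \<Rightarrow> tm \<Rightarrow> nat \<Rightarrow> tm" where
  "subst (Var i) s k = (if k < i then Var (i - 1) else if i = k then s else Var i)"
| "subst (Abs t) s k = Abs (subst t (lift s 0) (Suc k))"
| "subst (App t u) s k = App (subst t s k) (subst u s k)"

fun is_abs :: "tm \<Rightarrow> bool" where
  "is_abs (Abs _) = True"
| "is_abs _ = False"

text \<open>Uniform eval-apply evaluator XYZ (graph of the partial function).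
  X = True means la = ea (S), False means la = id (I); likewise Y for ar1, Z for ar2.
  op1 = ea, op2 = id.\<close>
inductive ueval :: "bool \<Rightarrow> bool \<Rightarrow> bool \<Rightarrow> tm \<Rightarrow> tm \<Rightarrow> bool"
  for X Y Z :: bool where
  var: "ueval X Y Z (Var x) (Var x)"
| abs_S: "X \<Longrightarrow> ueval X Y Z B B' \<Longrightarrow> ueval X Y Z (Abs B) (Abs B')"
| abs_I: "\<not> X \<Longrightarrow> ueval X Y Z (Abs B) (Abs B)"
| con_S: "Y \<Longrightarrow> ueval X Y Z M (Abs B) \<Longrightarrow> ueval X Y Z N N' \<Longrightarrow>
          ueval X Y Z (subst B N' 0) B' \<Longrightarrow> ueval X Y Z (App M N) B'"
| con_I: "\<not> Y \<Longrightarrow> ueval X Y Z M (Abs B) \<Longrightarrow>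
          ueval X Y Z (subst B N 0) B' \<Longrightarrow> ueval X Y Z (App M N) B'"
| neu_S: "Z \<Longrightarrow> ueval X Y Z M M' \<Longrightarrow> \<not> is_abs M' \<Longrightarrow> ueval X Y Z N N' \<Longrightarrow>
          ueval X Y Z (App M N) (App M' N')"
| neu_I: "\<not> Z \<Longrightarrow> ueval X Y Z M M' \<Longrightarrow> \<not> is_abs M' \<Longrightarrow>
          ueval X Y Z (App M N) (App M' N)"

abbreviation III where "III \<equiv> ueval False False False"
abbreviation IIS where "IIS \<equiv> ueval False False True"
abbreviation SII where "SII \<equiv> ueval True False False"

definition rcomp :: "('a \<Rightarrow> 'b \<Rightarrow> bool) \<Rightarrow> ('c \<Rightarrow> 'a \<Rightarrow> bool) \<Rightarrow> 'c \<Rightarrow> 'b \<Rightarrow> bool" where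
  "rcomp e2 e1 M N \<longleftrightarrow> (\<exists>M'. e1 M M' \<and> e2 M' N)"

definition absorbs :: "(tm \<Rightarrow> tm \<Rightarrow> bool) \<Rightarrow> (tm \<Rightarrow> tm \<Rightarrow> bool) \<Rightarrow> bool" where
  "absorbs st2 st1 \<longleftrightarrow> rcomp st2 st1 = st2"

end

theory Submission
  imports Defs
begin

declare subst.simps(1) [simp del]
declare if_not_P [simp] not_less_eq [simp]

lemma subst_eq [simp]: "subst (Var k) u k = u"
  by (simp add: subst.simps)
lemma subst_gt [simp]: "i < j \<Longrightarrow> subst (Var j) u i = Var (j - 1)"
  by (simp add: subst.simps)
lemma subst_lt [simp]: "j < i \<Longrightarrow> subst (Var j) u i = Var j"
  by (simp add: subst.simps)

lemma lift_lift:
    "i < k + 1 \<Longrightarrow> lift (lift t i) (Suc k) = lift (lift t k) i"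
  by (induct t arbitrary: i k) auto

lemma lift_subst [simp]:
    "j < i + 1 \<Longrightarrow> lift (subst t s j) i = subst (lift t (i + 1)) (lift s i) j"
  by (induct t arbitrary: i j s)
    (simp_all add: diff_Suc subst.simps lift_lift split: nat.split)

lemma lift_subst_lt:
    "i < j + 1 \<Longrightarrow> lift (subst t s j) i = subst (lift t i) (lift s i) (j + 1)"
  by (induct t arbitrary: i j s) (simp_all add: subst.simps lift_lift)

lemma subst_lift [simp]: "subst (lift t k) s k = t"
  by (induct t arbitrary: k s) simp_all

lemma subst_subst:
    "i < j + 1 \<Longrightarrow> subst (subst t (lift v i) (Suc j)) (subst u v j) i = subst (subst t u i) v j"
  by (induct t arbitrary: i j u v)
    (simp_all add: diff_Suc subst.simps lift_lift [symmetric] lift_subst_lt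
      split: nat.split)

inductive neutral :: "tm \<Rightarrow> bool" where
  "neutral (Var x)"
| "neutral M \<Longrightarrow> neutral (App M N)"

lemma III_neutral: "III M V \<Longrightarrow> \<not> is_abs V \<Longrightarrow> neutral V"
  by (induction rule: ueval.induct) (auto intro: neutral.intros)

lemma neutral_not_abs: "neutral M \<Longrightarrow> \<not> is_abs M"
  by (induction rule: neutral.induct) auto

lemma IIS_neutral: "IIS M R \<Longrightarrow> neutral M \<Longrightarrow> neutral R"
proof (induction rule: ueval.induct)
  case (con_I M B N B')
  then show ?case by (auto elim: neutral.cases)
next
  case (neu_S M M' N N')
  then show ?case by (auto elim: neutral.cases intro: neutral.intros)
qed (auto elim: neutral.cases intro: neutral.intros)

lemma IIS_Abs: "IIS (Abs B) R \<Longrightarrow> R = Abs B"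
  by (auto elim: ueval.cases)

lemma IIS_back: "III M V \<Longrightarrow> IIS V R \<Longrightarrow> IIS M R"
proof (induction M V arbitrary: R rule: ueval.induct)
  case (con_I M B N B')
  have "IIS M (Abs B)" using con_I.IH(1) by (simp add: ueval.abs_I)
  then show ?case using con_I by (auto intro: ueval.con_I)
next
  case (neu_I M M' N)
  from neu_I.prems show ?case
  proof (cases rule: ueval.cases)
    case (con_I B)
    have "neutral M'" using III_neutral neu_I by blast
    then have "neutral (Abs B)" using IIS_neutral con_I by blast
    then show ?thesis using neutral_not_abs by fastforce
  next
    case (neu_S M'' N')
    then show ?thesis using neu_I by (auto intro: ueval.neu_S)
  qed auto
qed auto

lemma IIS_fwd: "IIS M R \<Longrightarrow> \<exists>V. III M V \<and> IIS V R"
proof (induction rule: ueval.induct)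
  case (var x)
  then show ?case by (auto intro: ueval.var)
next
  case (abs_I B)
  then show ?case by (auto intro: ueval.abs_I)
next
  case (con_I M B N B')
  then obtain V where V: "III M V" "IIS V (Abs B)" by blast
  have "V = Abs B"
  proof (cases "is_abs V")
    case True then obtain C where "V = Abs C" by (cases V) auto
    then show ?thesis using V IIS_Abs by auto
  next
    case False
    then have "neutral V" using III_neutral V by blast
    then have "neutral (Abs B)" using IIS_neutral V by blast
    then show ?thesis using neutral_not_abs by fastforce
  qed
  then show ?case using con_I V by (blast intro: ueval.con_I)
next
  case (neu_S M M' N N')
  then obtain V where V: "III M V" "IIS V M'" by blast
  have "\<not> is_abs V"
  proof
    assume "is_abs V" then obtain C where "V = Abs C" by (cases V) auto
    then have "M' = Abs C" using V IIS_Abs by blast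
    then show False using \<open>\<not> is_abs M'\<close> by simp
  qed
  then show ?case using V neu_S by (blast intro: ueval.neu_I ueval.neu_S)
qed auto

section \<open>SII via spine reduction\<close>

inductive step :: "tm \<Rightarrow> tm \<Rightarrow> bool" where
  beta: "step (App (Abs B) N) (subst B N 0)"
| appL: "step M M' \<Longrightarrow> step (App M N) (App M' N)"
| abs: "step B B' \<Longrightarrow> step (Abs B) (Abs B')"

inductive_cases step_cases: "step (Var x) R" "step (Abs B) R" "step (App M N) R"

definition nf where "nf M \<longleftrightarrow> (\<nexists>M'. step M M')"

lemma step_subst: "step B B' \<Longrightarrow> step (subst B N k) (subst B' N k)"
proof (induction B B' arbitrary: N k rule: step.induct)
  case (beta B P)
  have "step (subst (App (Abs B) P) N k)
     (subst (subst B (lift N 0) (Suc k)) (subst P N k) 0)"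
    by (simp add: step.beta)
  moreover have "subst (subst B (lift N 0) (Suc k)) (subst P N k) 0 = subst (subst B P 0) N k"
    using subst_subst[of 0 k B N P] by simp
  ultimately show ?case by simp
qed (auto intro: step.intros)

lemma diamond: "step M M1 \<Longrightarrow> step M M2 \<Longrightarrow> M1 = M2 \<or> (\<exists>P. step M1 P \<and> step M2 P)"
proof (induction M M1 arbitrary: M2 rule: step.induct)
  case (beta B N)
  from beta consider "M2 = subst B N 0"
    | (l) X where "step (Abs B) X" "M2 = App X N" using beta by (cases rule: step_cases(3)) auto
  then show ?case
  proof cases
    case 1 then show ?thesis by simp
  next
    case (l X)
    obtain B' where B': "X = Abs B'" "step B B'" using l(1) by (cases rule: step_cases(2)) auto
    have "step (subst B N 0) (subst B' N 0)" by (rule step_subst[OF B'(2)])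
    moreover have "step M2 (subst B' N 0)" using l B' step.beta by simp
    ultimately show ?thesis by blast
  qed
next
  case (appL M M' N)
  from appL.prems consider (b) B where "M = Abs B" "M2 = subst B N 0"
    | (l) M'' where "step M M''" "M2 = App M'' N" using appL.prems by (cases rule: step_cases(3)) auto
  then show ?case
  proof cases
    case (b B)
    then obtain B' where B': "M' = Abs B'" "step B B'" using appL.hyps(1)[unfolded b(1)] by (cases rule: step_cases(2)) auto
    then have "step M2 (subst B' N 0)" using b step_subst by simp
    moreover have "step (App M' N) (subst B' N 0)" using B' step.beta by simp
    ultimately show ?thesis using b by (auto intro: step.intros)
  next
    case (l M'')
    then show ?thesis using appL.IH[of M''] by (auto intro: step.intros)
  qed
next
  case (abs B B')
  from abs.prems obtain C where C: "M2 = Abs C" "step B C" by (cases rule: step_cases(2)) auto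
  from abs.IH[OF C(2)] show ?case using C(1) by (auto intro: step.abs)
qed

lemma nf_pow: assumes "(step ^^ n) M R" "nf M" shows "n = 0 \<and> R = M"
proof (cases n)
  case 0 then show ?thesis using assms by simp
next
  case (Suc k)
  have "(step ^^ Suc k) M R" using assms(1) Suc by simp
  then obtain y where "step M y" using relpowp_Suc_D2 by fast
  then show ?thesis using assms(2) by (auto simp: nf_def)
qed

lemma L1: "(step ^^ n) M R \<Longrightarrow> nf R \<Longrightarrow> step M M1 \<Longrightarrow> 0 < n \<and> (step ^^ (n-1)) M1 R"
proof (induction n arbitrary: M M1)
  case 0
  then show ?case by (auto simp: nf_def)
next
  case (Suc n)
  obtain M2 where M2: "step M M2" "(step ^^ n) M2 R"
    using relpowp_Suc_D2[OF Suc.prems(1)] by blast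
  from diamond[OF Suc.prems(3) M2(1)] show ?case
  proof
    assume "M1 = M2" then show ?thesis using M2 by simp
  next
    assume "\<exists>P. step M1 P \<and> step M2 P"
    then obtain P where P: "step M1 P" "step M2 P" by blast
    from Suc.IH[OF M2(2) Suc.prems(2) P(2)] have "0 < n" "(step ^^ (n-1)) P R" by auto
    then have "(step ^^ n) M1 R" using P(1) relpowp_Suc_I2[of step M1 P "n-1" R] by simp
    then show ?thesis by simp
  qed
qed

lemma Lstar: "(step ^^ k) M M1 \<Longrightarrow> (step ^^ n) M R \<Longrightarrow> nf R \<Longrightarrow> k \<le> n \<and> (step ^^ (n-k)) M1 R"
proof (induction k arbitrary: M1)
  case 0
  then show ?case by simp
next
  case (Suc k)
  from Suc.prems(1) obtain M0 where M0: "(step ^^ k) M M0" "step M0 M1" by auto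
  from Suc.IH[OF M0(1) Suc.prems(2,3)] have "k \<le> n" "(step ^^ (n-k)) M0 R" by auto
  from L1[OF this(2) Suc.prems(3) M0(2)] \<open>k \<le> n\<close> show ?case
    by (simp add: diff_Suc split: nat.split)
qed

lemma appL_pow: "(step ^^ n) M M' \<Longrightarrow> (step ^^ n) (App M N) (App M' N)"
  by (induction n arbitrary: M') (auto intro: step.appL)

lemma abs_pow: "(step ^^ n) B B' \<Longrightarrow> (step ^^ n) (Abs B) (Abs B')"
  by (induction n arbitrary: B') (auto intro: step.abs)

lemma abs_pow_inv: "(step ^^ n) (Abs B) R \<Longrightarrow> \<exists>R'. R = Abs R' \<and> (step ^^ n) B R'"
proof (induction n arbitrary: R)
  case 0 then show ?case by simp
next
  case (Suc n)
  obtain X where X: "(step ^^ n) (Abs B) X" "step X R" using relpowp_Suc_E[OF Suc.prems] by blast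
  from Suc.IH[OF X(1)] obtain R' where "X = Abs R'" "(step ^^ n) B R'" by blast
  with X(2) obtain R'' where "R = Abs R''" "step R' R''" by (cases rule: step_cases(2)) auto
  then show ?case using \<open>(step ^^ n) B R'\<close> by (intro exI[of _ R'']) (auto intro: relpowp_Suc_I)
qed

lemma appL_star: "step\<^sup>*\<^sup>* M M' \<Longrightarrow> step\<^sup>*\<^sup>* (App M N) (App M' N)"
  by (induction rule: rtranclp_induct) (auto intro: step.appL rtranclp.rtrancl_into_rtrancl)

lemma abs_star: "step\<^sup>*\<^sup>* M M' \<Longrightarrow> step\<^sup>*\<^sup>* (Abs M) (Abs M')"
  by (induction rule: rtranclp_induct) (auto intro: step.abs rtranclp.rtrancl_into_rtrancl)

lemma nf_Abs: "nf (Abs B) \<longleftrightarrow> nf B"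
  unfolding nf_def by (metis step.abs step_cases(2))

lemma nf_Var: "nf (Var x)"
  unfolding nf_def using step_cases(1) by blast

lemma nf_App: "nf M \<Longrightarrow> \<not> is_abs M \<Longrightarrow> nf (App M N)"
  unfolding nf_def by (metis is_abs.simps(1) step_cases(3))

lemma app_wn: "(step ^^ n) (App M N) R \<Longrightarrow> nf R \<Longrightarrow> \<exists>m Q. m \<le> n \<and> (step ^^ m) M Q \<and> nf Q"
proof (induction n arbitrary: M)
  case 0
  then have "nf (App M N)" by simp
  then have "nf M" by (auto simp: nf_def intro: step.appL)
  then show ?case by (intro exI[of _ 0]) auto
next
  case (Suc n)
  show ?case
  proof (cases "nf M")
    case True then show ?thesis by (intro exI[of _ 0]) auto
  next
    case False
    then obtain M1 where M1: "step M M1" by (auto simp: nf_def)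
    from L1[OF Suc.prems(1,2) step.appL[OF M1]] have "(step ^^ n) (App M1 N) R" by simp
    from Suc.IH[OF this Suc.prems(2)] obtain m Q where "m \<le> n" "(step ^^ m) M1 Q" "nf Q" by blast
    then show ?thesis using M1 relpowp_Suc_I2[of step M M1 m Q]
      by (intro exI[of _ "Suc m"]) auto
  qed
qed

lemma SII_red: "SII M R \<Longrightarrow> step\<^sup>*\<^sup>* M R \<and> nf R"
proof (induction rule: ueval.induct)
  case (var x) then show ?case by (simp add: nf_Var)
next
  case (abs_S B B')
  have "step\<^sup>*\<^sup>* (Abs B) (Abs B')" using abs_S.IH abs_star by blast
  then show ?case using abs_S.IH by (simp add: nf_Abs)
next
  case (con_I M B N B')
  have "step\<^sup>*\<^sup>* (App M N) (App (Abs B) N)" using con_I.IH appL_star by blast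
  then have "step\<^sup>*\<^sup>* (App M N) (subst B N 0)" using step.beta[of B N] by (rule rtranclp.rtrancl_into_rtrancl)
  then show ?case using con_I.IH rtranclp_trans by metis
next
  case (neu_I M M' N)
  have "step\<^sup>*\<^sup>* (App M N) (App M' N)" using neu_I.IH appL_star by blast
  moreover have "nf (App M' N)" using neu_I.IH neu_I.hyps nf_App by blast
  ultimately show ?case by blast
qed auto

lemma III_red: "III M R \<Longrightarrow> step\<^sup>*\<^sup>* M R"
proof (induction rule: ueval.induct)
  case (con_I M B N B')
  have "step\<^sup>*\<^sup>* (App M N) (App (Abs B) N)" using con_I.IH appL_star by blast
  then have "step\<^sup>*\<^sup>* (App M N) (subst B N 0)" using step.beta[of B N] by (rule rtranclp.rtrancl_into_rtrancl)
  then show ?case using con_I.IH rtranclp_trans by metis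
next
  case (neu_I M M' N)
  show ?case using neu_I.IH appL_star by blast
qed auto

lemma wn_SII: "(step ^^ n) M R \<Longrightarrow> nf R \<Longrightarrow> SII M R"
proof (induction n arbitrary: M R rule: less_induct)
  case (less n M0 R0)
  have "\<And>R. (step ^^ n) M R \<Longrightarrow> nf R \<Longrightarrow> SII M R" for M
  proof (induction M)
    case (Var x)
    then have "R = Var x" using nf_pow nf_Var by blast
    then show ?case by (simp add: ueval.var)
  next
    case (Abs B)
    then obtain R' where "R = Abs R'" "(step ^^ n) B R'" using abs_pow_inv by blast
    then show ?case using Abs nf_Abs by (auto intro: ueval.abs_S)
  next
    case (App M N)
    from app_wn[OF App.prems] obtain m Q where mQ: "m \<le> n" "(step ^^ m) M Q" "nf Q" by blast
    have SQ: "SII M Q"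
    proof (cases "m < n")
      case True then show ?thesis using less.IH[OF True mQ(2,3)] by blast
    next
      case False then have "m = n" using mQ(1) by simp
      then show ?thesis using App.IH(1)[of Q] mQ by simp
    qed
    show ?case
    proof (cases "is_abs Q")
      case True
      then obtain D where D: "Q = Abs D" by (cases Q) auto
      have "(step ^^ Suc m) (App M N) (subst D N 0)"
        using relpowp_Suc_I[OF appL_pow[OF mQ(2)[unfolded D], of N] step.beta] .
      from Lstar[OF this App.prems] have "Suc m \<le> n" "(step ^^ (n - Suc m)) (subst D N 0) R" by auto
      moreover have "n - Suc m < n" using \<open>Suc m \<le> n\<close> by simp
      ultimately have "SII (subst D N 0) R" using less.IH App.prems(2) by blast
      then show ?thesis using SQ D by (auto intro: ueval.con_I)
    next
      case False
      from Lstar[OF appL_pow[OF mQ(2), of N] App.prems] have "(step ^^ (n - m)) (App Q N) R" by auto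
      then have "R = App Q N" using nf_pow nf_App[OF mQ(3) False] by blast
      then show ?thesis using SQ False by (auto intro: ueval.neu_I)
    qed
  qed
  then show ?case using less.prems by blast
qed

lemma wn_III: "(step ^^ n) M R \<Longrightarrow> nf R \<Longrightarrow> \<exists>V. III M V"
proof (induction n arbitrary: M R rule: less_induct)
  case (less n M0 R0)
  have "\<And>R. (step ^^ n) M R \<Longrightarrow> nf R \<Longrightarrow> \<exists>V. III M V" for M
  proof (induction M)
    case (Var x)
    then show ?case by (blast intro: ueval.var)
  next
    case (Abs B)
    then show ?case by (blast intro: ueval.abs_I)
  next
    case (App M N)
    from app_wn[OF App.prems] obtain m Q where mQ: "m \<le> n" "(step ^^ m) M Q" "nf Q" by blast
    obtain V where V: "III M V"
    proof (cases "m < n")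
      case True then show ?thesis using less.IH[OF True mQ(2,3)] that by blast
    next
      case False then have "m = n" using mQ(1) by simp
      then show ?thesis using App.IH(1)[of Q] mQ that by auto
    qed
    obtain k where k: "(step ^^ k) M V" using III_red[OF V] unfolding rtranclp_power by blast
    show ?case
    proof (cases "is_abs V")
      case True
      then obtain D where D: "V = Abs D" by (cases V) auto
      have "(step ^^ Suc k) (App M N) (subst D N 0)"
        using relpowp_Suc_I[OF appL_pow[OF k[unfolded D], of N] step.beta] .
      from Lstar[OF this App.prems] have "Suc k \<le> n" "(step ^^ (n - Suc k)) (subst D N 0) R" by auto
      moreover have "n - Suc k < n" using \<open>Suc k \<le> n\<close> by simp
      ultimately obtain V' where "III (subst D N 0) V'" using less.IH App.prems(2) by blast
      then show ?thesis using V D by (blast intro: ueval.con_I)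
    next
      case False
      then show ?thesis using V by (blast intro: ueval.neu_I)
    qed
  qed
  then show ?case using less.prems by blast
qed

lemma SII_back: "III M V \<Longrightarrow> SII V R \<Longrightarrow> SII M R"
proof -
  assume a: "III M V" "SII V R"
  have "step\<^sup>*\<^sup>* M R" using rtranclp_trans[OF III_red[OF a(1)]] SII_red[OF a(2)] by blast
  have "nf R" using SII_red[OF a(2)] by blast
  obtain n where "(step ^^ n) M R" using \<open>step\<^sup>*\<^sup>* M R\<close> unfolding rtranclp_power by blast
  then show ?thesis using wn_SII \<open>nf R\<close> by blast
qed

lemma SII_fwd: "SII M R \<Longrightarrow> \<exists>V. III M V \<and> SII V R"
proof -
  assume a: "SII M R"
  have r: "step\<^sup>*\<^sup>* M R" and nR: "nf R" using SII_red[OF a] by auto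
  obtain n where n: "(step ^^ n) M R" using r unfolding rtranclp_power by blast
  obtain V where V: "III M V" using wn_III[OF n nR] by blast
  obtain k where k: "(step ^^ k) M V" using III_red[OF V] unfolding rtranclp_power by blast
  from Lstar[OF k n nR] have "(step ^^ (n - k)) V R" by simp
  then have "SII V R" using wn_SII nR by blast
  then show ?thesis using V by blast
qed

lemma eq1: "rcomp IIS III = IIS"
proof (intro ext iffI)
  fix M R assume "rcomp IIS III M R"
  then obtain V where "III M V" "IIS V R" unfolding rcomp_def by blast
  then show "IIS M R" by (rule IIS_back)
next
  fix M R assume "IIS M R"
  then show "rcomp IIS III M R" unfolding rcomp_def using IIS_fwd by blast
qed

lemma eq2: "rcomp SII III = SII"
proof (intro ext iffI)
  fix M R assume "rcomp SII III M R"
  then obtain V where "III M V" "SII V R" unfolding rcomp_def by blast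
  then show "SII M R" by (rule SII_back)
next
  fix M R assume "SII M R"
  then show "rcomp SII III M R" unfolding rcomp_def using SII_fwd by blast
qed

theorem mainTheorem3:
  shows "absorbs IIS III \<and> absorbs SII III"
  unfolding absorbs_def using eq1 eq2 by blast

end
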